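(* Let $n\ge3$, let $g$ be the constant contravariant metric on $\mathbb R^n$ with $g^{ij}=\delta^{i,n+1-j}$, and for $k=1,\dots,n-2$ let $X_{(k)}=\sum_{i=1}^{n-k}(n-k+1-2i)\,u^{i+k}\partial_{u^i}$. Then for all $k$ and all $\alpha\ge0$: (1) $\mathcal L_{X_{(k)}}g=0$; (2) $\mathcal L_{X_{(k)}}\mu^{(n;\alpha)}=p_{[n,k,\alpha]}\,\mu^{(n;\alpha+k)}$; (3) for every $m\ge1$, $\mathcal L^m_{X_{(k)}}\mu^{(n;\alpha)}=\Big(\prod_{s=0}^{m-1}(p_{[n,k,\alpha]}-2ks)\Big)\mu^{(n;\alpha+mk)}$, where $p_{[n,k,\alpha]}=3k+1-n-2\alpha$.
   Context: $\mathcal L$ denotes the Lie derivative (acting on symmetric bivectors). For integers $n\ge1$, $k\ge0$ the symmetric bivector $\mu^{(n;k)}$ has components $\mu^{(n;k)ij}=[3(i+j)-2(n+2-k)]\,u^{i+j-1+k}$, $i,j=1,\dots,n$, with the convention $u^\beta\equiv0$ for $\beta>n$ (so $\mu^{(n;k)}=0$ for $k>n-2$). *)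

theory Defs
  imports "HOL-Analysis.Analysis"
begin

text \<open>Points of R^n are functions u :: nat => real; only coordinates u 1, ..., u n are used.
  Fields: scalar (point => real), vector (point => index => real),
  bivector (point => index => index => real); indices range over 1..n.\<close>

type_synonym point = "nat \<Rightarrow> real"
type_synonym vfield = "point \<Rightarrow> nat \<Rightarrow> real"
type_synonym bfield = "point \<Rightarrow> nat \<Rightarrow> nat \<Rightarrow> real"

definition pd :: "nat \<Rightarrow> (point \<Rightarrow> real) \<Rightarrow> point \<Rightarrow> real" where
  "pd s f u = deriv (\<lambda>t. f (u(s := t))) (u s)"

definition lie :: "nat \<Rightarrow> vfield \<Rightarrow> bfield \<Rightarrow> bfield" where
  "lie n X P u i j =
     (\<Sum>s=1..n. X u s * pd s (\<lambda>v. P v i j) u)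
     - (\<Sum>s=1..n. P u s j * pd s (\<lambda>v. X v i) u)
     - (\<Sum>s=1..n. P u i s * pd s (\<lambda>v. X v j) u)"

definition coord :: "nat \<Rightarrow> nat \<Rightarrow> point \<Rightarrow> real" where
  "coord n \<beta> u = (if \<beta> \<le> n then u \<beta> else 0)"

definition gmet :: "nat \<Rightarrow> bfield" where
  "gmet n u i j = (if i + j = n + 1 then 1 else 0)"

definition mu :: "nat \<Rightarrow> nat \<Rightarrow> bfield" where
  "mu n k u i j = (3 * (real i + real j) - 2 * (real n + 2 - real k)) * coord n (i + j - 1 + k) u"

definition Xk :: "nat \<Rightarrow> nat \<Rightarrow> vfield" where
  "Xk n k u i = (if 1 \<le> i \<and> i \<le> n - k
                 then (real n - real k + 1 - 2 * real i) * coord n (i + k) u else 0)"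

definition pcoef :: "nat \<Rightarrow> nat \<Rightarrow> nat \<Rightarrow> real" where
  "pcoef n k \<alpha> = 3 * real k + 1 - real n - 2 * real \<alpha>"

end

theory Submission
  imports Defs
begin

lemma pd_lin: "pd s (\<lambda>v. a * coord n b v) u = (if b \<le> n \<and> s = b then a else 0)"
proof -
  have "((\<lambda>t. a * t) has_real_derivative a) (at x)" for x
    using DERIV_cmult_Id by blast
  then have d: "deriv (\<lambda>t. a * t) x = a" for x by (rule DERIV_imp_deriv)
  show ?thesis
  proof (cases "b \<le> n \<and> s = b")
    case True then show ?thesis unfolding pd_def coord_def by (auto simp: d)
  next
    case False
    then have "(\<lambda>t. a * coord n b (u(s := t))) = (\<lambda>t. a * coord n b u)"
      unfolding coord_def by auto
    then show ?thesis using False unfolding pd_def by auto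
  qed
qed

lemma pd_const: "pd s (\<lambda>v. a) u = 0"
  unfolding pd_def by simp

lemma sum_pick: "(\<Sum>s=1..(n::nat). f s * (if P \<and> s = b then a else 0)) =
   (if P \<and> 1 \<le> b \<and> b \<le> n then f b * a else (0::real))"
proof -
  have "(\<Sum>s=1..n. f s * (if P \<and> s = b then a else 0)) = (\<Sum>s\<in>{1..n}. if s = b then (if P then f b * a else 0) else 0)"
    by (rule sum.cong) auto
  also have "\<dots> = (if b \<in> {1..n} then (if P then f b * a else 0) else 0)"
    by (rule sum.delta) simp
  also have "\<dots> = (if P \<and> 1 \<le> b \<and> b \<le> n then f b * a else 0)"
    by simp
  
  finally show ?thesis .
qed

lemma Xk_lin: "Xk n k v i = (if 1 \<le> i \<and> i \<le> n - k then real n - real k + 1 - 2 * real i else 0) * coord n (i+k) v"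
  unfolding Xk_def by simp

lemma pd_Xk: "pd s (\<lambda>v. Xk n k v i) u = (if i + k \<le> n \<and> s = i + k then (if 1 \<le> i \<and> i \<le> n - k then real n - real k + 1 - 2 * real i else 0) else 0)"
  unfolding Xk_lin pd_lin by simp

lemma mu_lin: "c * mu n g v i j = (c * (3 * (real i + real j) - 2 * (real n + 2 - real g))) * coord n (i + j - 1 + g) v"
  unfolding mu_def by simp

lemma lie_mu0:
  assumes "i' + 1 \<le> n' + k" "j' + 1 \<le> n' + k" "1 \<le> k"
  shows "lie (n' + k) (Xk (n' + k) k) (\<lambda>u i j. c * mu (n' + k) g u i j) u (Suc i') (Suc j')
     = c * pcoef (n' + k) k g * mu (n' + k) (g + k) u (Suc i') (Suc j')"
proof (cases "i' + j' + g + 1 + k \<le> n' + k")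
  case True
  show ?thesis
    unfolding lie_def mu_lin pd_lin pd_Xk sum_pick
    using assms True
    apply (simp add: Xk_def coord_def pcoef_def mu_def algebra_simps)
    done
next
  case False
  show ?thesis
    unfolding lie_def mu_lin pd_lin pd_Xk sum_pick
    using assms False
    by (simp add: Xk_def coord_def pcoef_def mu_def algebra_simps)
qed

lemma lie_mu:
  assumes "i \<in> {1..n}" "j \<in> {1..n}" "1 \<le> k" "k \<le> n"
  shows "lie n (Xk n k) (\<lambda>u i j. c * mu n g u i j) u i j = c * pcoef n k g * mu n (g + k) u i j"
proof -
  obtain n' where n: "n = n' + k" using assms le_Suc_ex by (metis add.commute)
  obtain i' where i: "i = Suc i'" using assms by (metis atLeastAtMost_iff not0_implies_Suc not_one_le_zero)
  obtain j' where j: "j = Suc j'" using assms by (metis atLeastAtMost_iff not0_implies_Suc not_one_le_zero)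
  show ?thesis using lie_mu0[of i' n' k j' c g u] assms unfolding n i j by simp
qed

lemma lie_cong:
  assumes "\<And>v i j. i \<in> {1..n} \<Longrightarrow> j \<in> {1..n} \<Longrightarrow> Q v i j = R v i j"
    and "i \<in> {1..n}" "j \<in> {1..n}"
  shows "lie n X Q u i j = lie n X R u i j"
proof -
  have e: "(\<lambda>v. Q v i j) = (\<lambda>v. R v i j)" using assms by auto
  have s2: "(\<Sum>s=1..n. Q u s j * pd s (\<lambda>v. X v i) u) = (\<Sum>s=1..n. R u s j * pd s (\<lambda>v. X v i) u)"
    using assms by (intro sum.cong[OF refl]) auto
  have s3: "(\<Sum>s=1..n. Q u i s * pd s (\<lambda>v. X v j) u) = (\<Sum>s=1..n. R u i s * pd s (\<lambda>v. X v j) u)"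
    using assms by (intro sum.cong[OF refl]) auto
  show ?thesis unfolding lie_def e s2 s3 ..
qed

lemma lie_g0:
  assumes "i' + 1 \<le> n' + k" "j' + 1 \<le> n' + k" "1 \<le> k"
  shows "lie (n' + k) (Xk (n' + k) k) (gmet (n' + k)) u (Suc i') (Suc j') = 0"
proof -
  have pg: "pd s (\<lambda>v. gmet (n' + k) v (Suc i') (Suc j')) u = 0" for s unfolding gmet_def by (rule pd_const)
  show ?thesis
  proof (cases "i' + j' + k = n'")
    case True
    show ?thesis unfolding lie_def pg pd_Xk sum_pick using assms True
      by (simp add: gmet_def)
  next
    case False
    show ?thesis unfolding lie_def pg pd_Xk sum_pick using assms False
      by (simp add: gmet_def)
  qed
qed

lemma lie_g:
  assumes "i \<in> {1..n}" "j \<in> {1..n}" "1 \<le> k" "k \<le> n"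
  shows "lie n (Xk n k) (gmet n) u i j = 0"
proof -
  obtain n' where n: "n = n' + k" using assms le_Suc_ex by (metis add.commute)
  obtain i' where i: "i = Suc i'" using assms by (metis atLeastAtMost_iff not0_implies_Suc not_one_le_zero)
  obtain j' where j: "j = Suc j'" using assms by (metis atLeastAtMost_iff not0_implies_Suc not_one_le_zero)
  show ?thesis using lie_g0[of i' n' k j' u] assms unfolding n i j by simp
qed

lemma iter:
  assumes "1 \<le> k" "k \<le> n" "i \<in> {1..n}" "j \<in> {1..n}"
  shows "(lie n (Xk n k) ^^ Suc m) (mu n \<alpha>) u i j
     = (\<Prod>s=0..m. pcoef n k \<alpha> - 2 * real k * real s) * mu n (\<alpha> + Suc m * k) u i j"
  using assms(3,4)
proof (induction m arbitrary: u i j)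
  case 0
  show ?case using lie_mu[OF 0 assms(1,2), of 1 \<alpha> u] by simp
next
  case (Suc m)
  have "(lie n (Xk n k) ^^ Suc (Suc m)) (mu n \<alpha>) u i j
      = lie n (Xk n k) ((lie n (Xk n k) ^^ Suc m) (mu n \<alpha>)) u i j" by simp
  also have "\<dots> = lie n (Xk n k) (\<lambda>u i j. (\<Prod>s=0..m. pcoef n k \<alpha> - 2 * real k * real s) * mu n (\<alpha> + Suc m * k) u i j) u i j"
    by (rule lie_cong[OF Suc.IH Suc.prems])
  also have "\<dots> = (\<Prod>s=0..m. pcoef n k \<alpha> - 2 * real k * real s) * pcoef n k (\<alpha> + Suc m * k) * mu n (\<alpha> + Suc m * k + k) u i j"
    by (rule lie_mu[OF Suc.prems assms(1,2)])
  also have "pcoef n k (\<alpha> + Suc m * k) = pcoef n k \<alpha> - 2 * real k * real (Suc m)"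
    unfolding pcoef_def by (simp add: algebra_simps)
  also have "\<alpha> + Suc m * k + k = \<alpha> + Suc (Suc m) * k" by simp
  finally show ?case by (simp add: prod.atLeast0_atMost_Suc)
qed

theorem lemma3:
  fixes n k \<alpha> :: nat
  assumes "n \<ge> 3" and "1 \<le> k" and "k \<le> n - 2"
  shows "(\<forall>u i j. i \<in> {1..n} \<longrightarrow> j \<in> {1..n} \<longrightarrow> lie n (Xk n k) (gmet n) u i j = 0)
       \<and> (\<forall>u i j. i \<in> {1..n} \<longrightarrow> j \<in> {1..n} \<longrightarrow>
            lie n (Xk n k) (mu n \<alpha>) u i j = pcoef n k \<alpha> * mu n (\<alpha> + k) u i j)
       \<and> (\<forall>m \<ge> 1. \<forall>u i j. i \<in> {1..n} \<longrightarrow> j \<in> {1..n} \<longrightarrow>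
            (lie n (Xk n k) ^^ m) (mu n \<alpha>) u i j
              = (\<Prod>s=0..m-1. pcoef n k \<alpha> - 2 * real k * real s) * mu n (\<alpha> + m * k) u i j)"
proof (intro conjI allI impI)
  have kn: "k \<le> n" using assms by simp
  show "lie n (Xk n k) (gmet n) u i j = 0" if "i \<in> {1..n}" "j \<in> {1..n}" for u i j
    using lie_g[OF that assms(2) kn] .
  show "lie n (Xk n k) (mu n \<alpha>) u i j = pcoef n k \<alpha> * mu n (\<alpha> + k) u i j"
    if "i \<in> {1..n}" "j \<in> {1..n}" for u i j
    using iter[OF assms(2) kn that, of 0 \<alpha> u] by simp
  show "(lie n (Xk n k) ^^ m) (mu n \<alpha>) u i j
              = (\<Prod>s=0..m-1. pcoef n k \<alpha> - 2 * real k * real s) * mu n (\<alpha> + m * k) u i j"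
    if "m \<ge> 1" "i \<in> {1..n}" "j \<in> {1..n}" for m u i j
  proof -
    obtain m' where m: "m = Suc m'" using \<open>1 \<le> m\<close> by (cases m) auto
    show ?thesis using iter[OF assms(2) kn that(2,3), of m' \<alpha> u] unfolding m by simp
  qed
qed

end
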